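(* Let $T=2^m$, $d\ge1$ and $u_{1:T}\in(\mathbb{R}^d)^T$, and let $P=\sum_{t=1}^{T-1}\|u_{t+1}-u_t\|_2$. Then for every scale $j^*\in[1:m]$, $P^{(j^* )}\le P$, where $P^{(j^* )}$ is defined in the context.
   Context: Haar features for $T=2^m$: for scale $j\in[1:m]$ and location $l\in[1:2^{-j}T]$, $h^{(j,l)}\in\mathbb{R}^T$ has $t$-th entry $1$ for $t\in[2^j(l-1)+1:2^j(l-1)+2^{j-1}]$, $-1$ for $t\in[2^j(l-1)+2^{j-1}+1:2^jl]$, and $0$ otherwise; normalized $\tilde h^{(j,l)}=2^{-j/2}h^{(j,l)}$. For $i\in[1:d]$, $u^{(i)}_{1:T}\in\mathbb{R}^T$ is the sequence of $i$-th coordinates of $u_1,\ldots,u_T$. Coefficient $\hat u^{(j,l)}\in\mathbb{R}^d$ has $i$-th entry $\langle\tilde h^{(j,l)},u^{(i)}_{1:T}\rangle$. Detail sequences: $z^{(j,l)}_t=\hat u^{(j,l)}\tilde h^{(j,l)}_t\in\mathbb{R}^d$. Path length of the $(j,l)$ detail within its support: $P^{(j,l)}=\sum_{t=2^j(l-1)+1}^{2^jl-1}\|z^{(j,l)}_{t+1}-z^{(j,l)}_t\|_2$, and $P^{(j)}=\sum_l P^{(j,l)}$. *)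

theory Defs
  imports "HOL-Analysis.Analysis"
begin

definition haar :: "nat \<Rightarrow> nat \<Rightarrow> nat \<Rightarrow> real" where
  "haar j l t =
     (if 2^j*(l-1)+1 \<le> t \<and> t \<le> 2^j*(l-1) + 2^(j-1) then 1
      else if 2^j*(l-1) + 2^(j-1) + 1 \<le> t \<and> t \<le> 2^j*l then -1
      else 0)"

definition haar_n :: "nat \<Rightarrow> nat \<Rightarrow> nat \<Rightarrow> real" where
  "haar_n j l t = 2 powr (- real j / 2) * haar j l t"

definition haar_coeff :: "nat \<Rightarrow> (nat \<Rightarrow> real^'d) \<Rightarrow> nat \<Rightarrow> nat \<Rightarrow> real^'d" where
  "haar_coeff T u j l = (\<chi> i. \<Sum>t=1..T. haar_n j l t * (u t $ i))"

definition detail :: "nat \<Rightarrow> (nat \<Rightarrow> real^'d) \<Rightarrow> nat \<Rightarrow> nat \<Rightarrow> nat \<Rightarrow> real^'d" where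
  "detail T u j l t = haar_n j l t *\<^sub>R haar_coeff T u j l"

definition path_jl :: "nat \<Rightarrow> (nat \<Rightarrow> real^'d) \<Rightarrow> nat \<Rightarrow> nat \<Rightarrow> real" where
  "path_jl T u j l =
     (\<Sum>t = 2^j*(l-1)+1 .. 2^j*l - 1. norm (detail T u j l (t+1) - detail T u j l t))"

definition path_j :: "nat \<Rightarrow> (nat \<Rightarrow> real^'d) \<Rightarrow> nat \<Rightarrow> real" where
  "path_j T u j = (\<Sum>l=1..T div 2^j. path_jl T u j l)"

definition path_len :: "nat \<Rightarrow> (nat \<Rightarrow> real^'d) \<Rightarrow> real" where
  "path_len T u = (\<Sum>t=1..T-1. norm (u (t+1) - u t))"

end

theory Submission
  imports Defs
begin
lemma haar_alt:
  assumes "a = 2^j*(l-1)" "h = 2^(j-1)" "j \<ge> 1" "l \<ge> 1"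
  shows "haar j l t = (if a+1 \<le> t \<and> t \<le> a+h then 1 else if a+h+1 \<le> t \<and> t \<le> a+2*h then -1 else 0)"
proof -
  have hj: "(2::nat)^j = 2*h" using assms(2,3) by (metis One_nat_def Suc_pred less_eq_Suc_le power_Suc)
  have "2^j*l = a + 2*h" using assms(1,4) hj by (metis add.commute le_add_diff_inverse mult.right_neutral mult_Suc_right plus_1_eq_Suc)
  then show ?thesis unfolding haar_def using assms(1,2) by simp
qed

lemma tele:
  fixes u :: "nat \<Rightarrow> 'a::real_normed_vector"
  shows "norm (u (b+h) - u b) \<le> (\<Sum>s\<in>{b..<b+h}. norm (u (s+1) - u s))"
proof (induction h)
  case 0 then show ?case by simp
next
  case (Suc h)
  have "norm (u (b+Suc h) - u b) \<le> norm (u (b+h+1) - u (b+h)) + norm (u (b+h) - u b)"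
    using norm_triangle_ineq[of "u (b+h+1) - u (b+h)" "u (b+h) - u b"] by simp
  also have "\<dots> \<le> norm (u (b+h+1) - u (b+h)) + (\<Sum>s\<in>{b..<b+h}. norm (u (s+1) - u s))"
    using Suc by simp
  finally show ?case by simp
qed

lemma block:
  fixes u :: "nat \<Rightarrow> real^'d"
  assumes j: "j \<ge> 1" and l: "l \<ge> 1" and T: "2^j*l \<le> T"
  shows "path_jl T u j l \<le> (\<Sum>s\<in>{2^j*(l-1)+1..<2^j*l}. norm (u (s+1) - u s))"
proof -
  define a where "a = (2::nat)^j*(l-1)"
  define h where "h = (2::nat)^(j-1)"
  define sc where "sc = (2::real) powr (- real j / 2)"
  define cf where "cf = haar_coeff T u j l"
  define W where "W = (\<Sum>s\<in>{a+1..<a+2*h}. norm (u (s+1) - u s))"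
  have hj: "(2::nat)^j = 2*h" using h_def j by (metis One_nat_def Suc_pred less_eq_Suc_le power_Suc)
  have e: "2^j*l = a + 2*h" using a_def l hj by (metis add.commute le_add_diff_inverse mult.right_neutral mult_Suc_right plus_1_eq_Suc)
  have h1: "h \<ge> 1" using h_def by simp
  have HA: "haar j l t = (if a+1 \<le> t \<and> t \<le> a+h then 1 else if a+h+1 \<le> t \<and> t \<le> a+2*h then -1 else 0)" for t
    using haar_alt[OF a_def h_def j l] .
  have hd: "haar j l (t+1) - haar j l t = (if t = a+h then -2 else 0)" if "a+1 \<le> t" "t \<le> a+2*h-1" for t
    using that h1 unfolding HA by auto
  have nd: "norm (detail T u j l (t+1) - detail T u j l t) = (if t = a+h then 2 * sc * norm cf else 0)"
    if "a+1 \<le> t" "t \<le> a+2*h-1" for t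
  proof -
    have "detail T u j l (t+1) - detail T u j l t = (sc*(haar j l (t+1) - haar j l t)) *\<^sub>R cf"
      unfolding detail_def haar_n_def cf_def sc_def by (simp add: algebra_simps)
    moreover have "sc > 0" unfolding sc_def by simp
    ultimately show ?thesis using hd[OF that] by auto
  qed
  have P: "path_jl T u j l = 2 * sc * norm cf"
  proof -
    have "path_jl T u j l = (\<Sum>t\<in>{a+1..a+2*h-1}. norm (detail T u j l (t+1) - detail T u j l t))"
      unfolding path_jl_def a_def[symmetric] e by simp
    also have "\<dots> = (\<Sum>t\<in>{a+1..a+2*h-1}. (if t = a+h then 2 * sc * norm cf else 0))"
      by (intro sum.cong refl nd) auto
    also have "\<dots> = 2 * sc * norm cf" using h1 by simp
    finally show ?thesis .
  qed
  define V where "V = (\<Sum>t\<in>{1..T}. haar j l t *\<^sub>R u t)"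
  have cV: "cf = sc *\<^sub>R V"
    unfolding cf_def V_def haar_coeff_def haar_n_def sc_def
    by (simp add: vec_eq_iff sum_component sum_distrib_left mult.assoc)
  define A where "A = {a+1..a+h}"
  define B where "B = {a+h+1..a+2*h}"
  have "V = (\<Sum>t\<in>{1..T}. (if t \<in> A then u t else 0) - (if t \<in> B then u t else 0))"
    unfolding V_def by (rule sum.cong) (auto simp: HA A_def B_def)
  also have "\<dots> = sum u ({1..T} \<inter> A) - sum u ({1..T} \<inter> B)"
    by (simp add: sum_subtractf sum.inter_restrict)
  also have "{1..T} \<inter> A = A" using T e unfolding A_def by auto
  also have "{1..T} \<inter> B = B" using T e unfolding B_def by auto
  finally have V1: "V = sum u A - sum u B" .
  have sA: "sum u A = (\<Sum>k\<in>{1..h}. u (a+k))"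
    unfolding A_def using sum.shift_bounds_cl_nat_ivl[of u 1 a h] by (simp add: add.commute)
  have sB: "sum u B = (\<Sum>k\<in>{1..h}. u (a+h+k))"
    unfolding B_def using sum.shift_bounds_cl_nat_ivl[of u 1 "a+h" h] by (simp add: add.commute add.left_commute mult_2)
  have "norm V = norm (\<Sum>k\<in>{1..h}. u (a+k) - u (a+h+k))"
    using V1 sA sB by (simp add: sum_subtractf)
  also have "\<dots> \<le> (\<Sum>k\<in>{1..h}. norm (u (a+k) - u (a+h+k)))" by (rule norm_sum)
  also have "\<dots> \<le> (\<Sum>k\<in>{1..h}. W)"
  proof (rule sum_mono)
    fix k assume k: "k \<in> {1..h}"
    have "norm (u (a+k) - u (a+h+k)) = norm (u ((a+k)+h) - u (a+k))"
      by (simp add: norm_minus_commute add.commute add.left_commute)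
    also have "\<dots> \<le> (\<Sum>s\<in>{a+k..<a+k+h}. norm (u (s+1) - u s))" by (rule tele)
    also have "\<dots> \<le> W" unfolding W_def
      by (rule sum_mono2) (use k in auto)
    finally show "norm (u (a+k) - u (a+h+k)) \<le> W" .
  qed
  also have "\<dots> = real h * W" by simp
  finally have nV: "norm V \<le> real h * W" .
  have sp: "sc > 0" unfolding sc_def by simp
  have ss: "2 * sc * sc*real h = 1"
  proof -
    have "sc * sc = 2 powr (- real j)" unfolding sc_def by (simp add: powr_add[symmetric])
    moreover have "real (2*h) = 2 powr real j" using hj by (metis of_nat_numeral of_nat_power powr_realpow zero_less_numeral)
    ultimately show ?thesis by (simp add: powr_minus field_simps)
  qed
  have "path_jl T u j l = 2 * sc * sc*norm V" using P cV sp by simp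
  also have "\<dots> \<le> 2 * sc * sc*(real h*W)" using nV sp by (intro mult_left_mono) auto
  also have "\<dots> = W" using ss by (simp add: algebra_simps)
  finally show ?thesis unfolding W_def a_def[symmetric] e .
qed

lemma blocks:
  fixes D :: "nat \<Rightarrow> real"
  assumes D: "\<And>s. D s \<ge> 0"
  shows "(\<Sum>l=1..L. \<Sum>s\<in>{n*(l-1)+1..<n*l}. D s) \<le> (\<Sum>s\<in>{1..<n*L}. D s)"
proof (induction L)
  case 0 then show ?case by simp
next
  case (Suc L)
  have "(\<Sum>l=1..Suc L. \<Sum>s\<in>{n*(l-1)+1..<n*l}. D s)
      = (\<Sum>l=1..L. \<Sum>s\<in>{n*(l-1)+1..<n*l}. D s) + (\<Sum>s\<in>{n*L+1..<n*Suc L}. D s)"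
    by simp
  also have "\<dots> \<le> (\<Sum>s\<in>{1..<n*L}. D s) + (\<Sum>s\<in>{n*L+1..<n*Suc L}. D s)" using Suc by simp
  also have "\<dots> = (\<Sum>s\<in>{1..<n*L} \<union> {n*L+1..<n*Suc L}. D s)"
    by (rule sum.union_disjoint[symmetric]) auto
  also have "\<dots> \<le> (\<Sum>s\<in>{1..<n*Suc L}. D s)"
    by (rule sum_mono2) (auto simp: D)
  finally show ?case .
qed

theorem lemma7:
  fixes m :: nat and T :: nat and u :: "nat \<Rightarrow> real^'d" and jstar :: nat
  assumes "T = 2^m"
    and "1 \<le> jstar" and "jstar \<le> m"
  shows "path_j T u jstar \<le> path_len T u"
proof -
  define n where "n = (2::nat)^jstar"
  define L where "L = T div n"
  have nL: "n * L \<le> T" unfolding L_def by simp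
  have "path_j T u jstar = (\<Sum>l=1..L. path_jl T u jstar l)"
    unfolding path_j_def L_def n_def ..
  also have "\<dots> \<le> (\<Sum>l=1..L. \<Sum>s\<in>{n*(l-1)+1..<n*l}. norm (u (s+1) - u s))"
  proof (rule sum_mono)
    fix l assume l: "l \<in> {1..L}"
    have "n * l \<le> n * L" using l by simp
    then have "2^jstar * l \<le> T" using nL n_def by (metis le_trans)
    then show "path_jl T u jstar l \<le> (\<Sum>s\<in>{n*(l-1)+1..<n*l}. norm (u (s+1) - u s))"
      using block[OF assms(2), of l T u] l n_def by simp
  qed
  also have "\<dots> \<le> (\<Sum>s\<in>{1..<n*L}. norm (u (s+1) - u s))"
    by (rule blocks) simp
  also have "\<dots> \<le> (\<Sum>s\<in>{1..T-1}. norm (u (s+1) - u s))"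
    by (rule sum_mono2) (use nL in auto)
  also have "\<dots> = path_len T u" unfolding path_len_def ..
  finally show ?thesis .
qed

end
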